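(* Let $n\ge3$ and let $F(x,y)=a_0\prod_{i=1}^n(x-\alpha_iy)\in\mathbb{Z}[x,y]$ be a binary form of degree $n$ in the class $C(4s-2)$, with discriminant $D$ and Mahler measure $M$, and put $L_i(x,y)=x-\alpha_iy$. Let $h$ be a positive integer with $h<\frac{|D|^{1/(4(n-1))}}{10^n n^{n/(4(n-1))}}$ and put $Q=M/h$. Let $0\le\mathfrak{a}\le\mathfrak{b}$ with $\mathfrak{b}\le h$ and $\mathfrak{b}\le h^{1/2}\mathfrak{a}$, and suppose $F$ is reduced with respect to $(\mathfrak{a},\mathfrak{b})$. Suppose $(x_0,y_0)$ and $(x,y)$ are linearly independent primitive integer points with $\mathfrak{a}\le|F(x_0,y_0)|\le\mathfrak{b}$ and $\mathfrak{a}\le|F(x,y)|\le\mathfrak{b}$. Then there are numbers $\psi_1,\dots,\psi_n$ with $\psi_i=0$ or $\frac{1}{2n}\le\psi_i\le1$ for each $i$, and $\sum_{i=1}^n\psi_i\ge\frac12$, such that for every $i\in\{1,\dots,n\}$ $$\left|\frac{L_i(x_0,y_0)}{L_i(x,y)}\right|\ge\left(Q^{\psi_i}-\frac32-h^{1/(2n)}\right)|x_0y-xy_0|.$$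
   Context: $\alpha_1,\dots,\alpha_n$ are the roots of $F(x,1)$ and $a_0=F(1,0)$. $C(t)$ is the set of binary forms of degree $n$ with integer coefficients, irreducible over $\mathbb{Q}$, such that for all real $(u,v)\neq(0,0)$ the form $uF_x+vF_y$ has at most $t$ real zeros. For $F=c\prod(x-\gamma_iy)$, $M(F)=|c|\prod_i\max(1,|\gamma_i|)$ and $D=c^{2(n-1)}\prod_{i<j}(\gamma_i-\gamma_j)^2$. Forms $F,G$ are equivalent if $G=\pm F(ax+by,cx+dy)$ with $\begin{pmatrix}a&b\\c&d\end{pmatrix}\in GL_2(\mathbb{Z})$. $F$ is normalized with respect to $(\mathfrak{a},\mathfrak{b})$ if $\mathfrak{a}\le|F(1,0)|\le\mathfrak{b}$, and reduced if it is normalized and has smallest Mahler measure among normalized forms equivalent to it. Primitive means $\gcd(x,y)=1$. *)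

theory Defs
  imports "HOL-Analysis.Analysis" "Berlekamp_Zassenhaus.Mahler_Measure"
begin

text \<open>A binary form of degree n with integer coefficients is represented by the int poly
  p = F(x,1) (with degree p \<le> n), so that F(x,y) = sum_k coeff p k x^k y^(n-k).\<close>

definition bform :: "nat \<Rightarrow> int poly \<Rightarrow> 'a::comm_ring_1 \<Rightarrow> 'a \<Rightarrow> 'a" where
  "bform n p x y = (\<Sum>k\<le>n. of_int (Polynomial.coeff p k) * x ^ k * y ^ (n - k))"

definition bform_dx :: "nat \<Rightarrow> int poly \<Rightarrow> real \<Rightarrow> real \<Rightarrow> real" where
  "bform_dx n p x y = (\<Sum>k\<le>n. real k * of_int (Polynomial.coeff p k) * x ^ (k - 1) * y ^ (n - k))"

definition bform_dy :: "nat \<Rightarrow> int poly \<Rightarrow> real \<Rightarrow> real \<Rightarrow> real" where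
  "bform_dy n p x y = (\<Sum>k\<le>n. real (n - k) * of_int (Polynomial.coeff p k) * x ^ k * y ^ (n - k - 1))"

definition real_proj_zeros :: "(real \<Rightarrow> real \<Rightarrow> real) \<Rightarrow> (real \<times> real) set" where
  "real_proj_zeros G = {(r, 1) | r. G r 1 = 0} \<union> {(1, 0) | _::unit. G 1 0 = 0}"

text \<open>Irreducible binary form of degree n over Q (n \<ge> 2 forces F(1,0) \<noteq> 0, i.e. Polynomial.degree p = n).\<close>
definition irreducible_bform :: "nat \<Rightarrow> int poly \<Rightarrow> bool" where
  "irreducible_bform n p \<longleftrightarrow> Polynomial.degree p = n \<and> irreducible (map_poly rat_of_int p)"

definition class_C :: "nat \<Rightarrow> nat \<Rightarrow> int poly \<Rightarrow> bool" where
  "class_C t n p \<longleftrightarrow> irreducible_bform n p \<and>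
     (\<forall>u v::real. (u, v) \<noteq> (0, 0) \<longrightarrow>
        (let Z = real_proj_zeros (\<lambda>x y. u * bform_dx n p x y + v * bform_dy n p x y)
         in finite Z \<and> card Z \<le> t))"

definition equiv_bform :: "nat \<Rightarrow> int poly \<Rightarrow> int poly \<Rightarrow> bool" where
  "equiv_bform n p q \<longleftrightarrow> Polynomial.degree q \<le> n \<and>
     (\<exists>a b c d (e::int). \<bar>a * d - b * c\<bar> = 1 \<and> (e = 1 \<or> e = -1) \<and>
        (\<forall>x y::int. bform n q x y = e * bform n p (a * x + b * y) (c * x + d * y)))"

definition normalized_bform :: "nat \<Rightarrow> real \<Rightarrow> real \<Rightarrow> int poly \<Rightarrow> bool" where
  "normalized_bform n A B p \<longleftrightarrow> A \<le> \<bar>real_of_int (bform n p 1 0)\<bar> \<and> \<bar>real_of_int (bform n p 1 0)\<bar> \<le> B"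

definition reduced_bform :: "nat \<Rightarrow> real \<Rightarrow> real \<Rightarrow> int poly \<Rightarrow> bool" where
  "reduced_bform n A B p \<longleftrightarrow> normalized_bform n A B p \<and>
     (\<forall>q. equiv_bform n p q \<and> normalized_bform n A B q \<longrightarrow> mahler_measure p \<le> mahler_measure q)"

definition disc_roots :: "nat \<Rightarrow> complex \<Rightarrow> (nat \<Rightarrow> complex) \<Rightarrow> complex" where
  "disc_roots n a0 \<alpha> = a0 ^ (2 * (n - 1)) * (\<Prod>j<n. \<Prod>i<j. (\<alpha> i - \<alpha> j) ^ 2)"

end

theory Submission
  imports Defs
begin

lemma lin_prod_deg_lead:
  "degree (\<Prod>i<m. [:- (b i), 1::complex:]) = m \<and> Polynomial.coeff (\<Prod>i<m. [:- (b i), 1::complex:]) m = 1"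
proof (induction m)
  case 0 then show ?case by simp
next
  case (Suc m)
  let ?P = "\<Prod>i<m. [:- (b i), 1::complex:]"
  have nz: "?P \<noteq> 0" using Suc by auto
  have "degree (?P * [:- b m, 1:]) = degree ?P + degree [:- b m, 1::complex:]"
    by (rule degree_mult_eq) (use nz in auto)
  then have d: "degree (?P * [:- b m, 1:]) = Suc m"
    using Suc by simp
  have "Polynomial.coeff (?P * [:- b m, 1:]) (Suc m) = lead_coeff (?P * [:- b m, 1:])" using d by simp
  also have "\<dots> = lead_coeff ?P * lead_coeff [:- b m, 1::complex:]" by (rule lead_coeff_mult)
  also have "\<dots> = 1" using Suc by simp
  finally show ?case using d by simp
qed

lemma bform_factored:
  fixes r :: "int poly" and c :: complex and \<beta> :: "nat \<Rightarrow> complex" and X Y :: complex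
  assumes h: "map_poly complex_of_int r = Polynomial.smult c (\<Prod>i<n. [:- \<beta> i, 1:])"
  shows "bform n r X Y = c * (\<Prod>i<n. (X - \<beta> i * Y))"
proof -
  let ?L = "\<Prod>i<n. [:- \<beta> i, 1::complex:]"
  have dl: "degree ?L = n" and cl: "Polynomial.coeff ?L n = 1" using lin_prod_deg_lead[where m=n and b=\<beta>] by auto
  have coef: "\<And>k. complex_of_int (Polynomial.coeff r k) = c * Polynomial.coeff ?L k"
  proof -
    fix k
    have "Polynomial.coeff (map_poly complex_of_int r) k = complex_of_int (Polynomial.coeff r k)"
      by (simp add: coeff_map_poly)
    then show "complex_of_int (Polynomial.coeff r k) = c * Polynomial.coeff ?L k" using h by simp
  qed
  have bf: "bform n r X Y = (\<Sum>k\<le>n. c * Polynomial.coeff ?L k * X ^ k * Y ^ (n - k))"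
    unfolding bform_def using coef by simp
  show ?thesis
  proof (cases "Y = 0")
    case True
    have "(\<Sum>k\<le>n. c * Polynomial.coeff ?L k * X ^ k * Y ^ (n - k)) = (\<Sum>k<Suc n. c * Polynomial.coeff ?L k * X ^ k * Y ^ (n - k))"
      by (simp add: lessThan_Suc_atMost)
    also have "\<dots> = (\<Sum>k<n. c * Polynomial.coeff ?L k * X ^ k * Y ^ (n - k)) + c * X ^ n"
      using cl by (simp add: sum.lessThan_Suc)
    also have "(\<Sum>k<n. c * Polynomial.coeff ?L k * X ^ k * Y ^ (n - k)) = 0"
      using True by (intro sum.neutral) auto
    finally show ?thesis using bf True by simp
  next
    case False
    have "(\<Sum>k\<le>n. c * Polynomial.coeff ?L k * X ^ k * Y ^ (n - k)) = (\<Sum>k\<le>n. c * Y ^ n * (Polynomial.coeff ?L k * (X / Y) ^ k))"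
    proof (rule sum.cong)
      fix k assume "k \<in> {..n}"
      then have kn: "k \<le> n" by simp
      have "Y ^ n = Y ^ k * Y ^ (n - k)" using kn by (simp flip: power_add)
      then show "c * Polynomial.coeff ?L k * X ^ k * Y ^ (n - k) = c * Y ^ n * (Polynomial.coeff ?L k * (X / Y) ^ k)"
        using False by (simp add: power_divide field_simps)
    qed simp
    also have "\<dots> = c * Y ^ n * (\<Sum>k\<le>n. Polynomial.coeff ?L k * (X / Y) ^ k)"
      by (simp add: sum_distrib_left)
    also have "(\<Sum>k\<le>n. Polynomial.coeff ?L k * (X / Y) ^ k) = poly ?L (X / Y)"
      unfolding poly_altdef dl ..
    also have "poly ?L (X / Y) = (\<Prod>i<n. (X / Y - \<beta> i))" by (simp add: poly_prod)
    also have "c * Y ^ n * (\<Prod>i<n. (X / Y - \<beta> i)) = c * (\<Prod>i<n. Y * (X / Y - \<beta> i))"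
      by (simp add: prod.distrib)
    also have "(\<Prod>i<n. Y * (X / Y - \<beta> i)) = (\<Prod>i<n. (X - \<beta> i * Y))"
      using False by (intro prod.cong) (auto simp: field_simps)
    finally show ?thesis using bf by simp
  qed
qed

lemma mm_lin_prod:
  fixes c :: complex and \<gamma> :: "nat \<Rightarrow> complex" and m :: nat
  shows
  "mahler_measure_poly (Polynomial.smult c (\<Prod>i<m. [:- \<gamma> i, 1:])) = cmod c * (\<Prod>i<m. max 1 (cmod (\<gamma> i)))"
proof (induction m)
  case 0
  have "Polynomial.smult c 1 = [:c:]" by simp
  then show ?case by simp
next
  case (Suc m)
  have "Polynomial.smult c (\<Prod>i<Suc m. [:- \<gamma> i, 1:]) = Polynomial.smult c (\<Prod>i<m. [:- \<gamma> i, 1:]) * [:- \<gamma> m, 1:]"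
    by (simp only: prod.lessThan_Suc mult_smult_left)
  then have "mahler_measure_poly (Polynomial.smult c (\<Prod>i<Suc m. [:- \<gamma> i, 1:])) =
     mahler_measure_poly (Polynomial.smult c (\<Prod>i<m. [:- \<gamma> i, 1:])) * mahler_measure_poly [:- \<gamma> m, 1:]"
    by (simp only: measure_eq_prod)
  then show ?case using Suc by (simp add: prod.lessThan_Suc)
qed

lemma bform_10: "bform n p (1::'a::comm_ring_1) 0 = of_int (Polynomial.coeff p n)"
proof -
  have "bform n p (1::'a) 0 = (\<Sum>k<Suc n. of_int (Polynomial.coeff p k) * 1 ^ k * (0::'a) ^ (n - k))"
    unfolding bform_def by (simp add: lessThan_Suc_atMost)
  also have "\<dots> = (\<Sum>k<n. of_int (Polynomial.coeff p k) * 1 ^ k * (0::'a) ^ (n - k)) + of_int (Polynomial.coeff p n)"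
    by (simp add: sum.lessThan_Suc)
  also have "(\<Sum>k<n. of_int (Polynomial.coeff p k) * 1 ^ k * (0::'a) ^ (n - k)) = 0"
    by (intro sum.neutral) (auto simp: power_0_left)
  finally show ?thesis by simp
qed

theorem lemma7p2:
  fixes n s :: nat and p :: "int poly" and \<alpha> :: "nat \<Rightarrow> complex"
    and h :: nat and A B :: real and x0 y0 x y :: int
  assumes n3: "n \<ge> 3" and s1: "s \<ge> 1"
    and classC: "class_C (4 * s - 2) n p"
    and roots: "map_poly complex_of_int p = Polynomial.smult (of_int (bform n p 1 0)) (\<Prod>i<n. [:- \<alpha> i, 1:])"
    and hpos: "h > 0"
    and hbound: "real h < cmod (disc_roots n (of_int (bform n p 1 0)) \<alpha>) powr (1 / (4 * (real n - 1)))
                         / (10 ^ n * real n powr (real n / (4 * (real n - 1))))"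
    and A0: "0 \<le> A" and AB: "A \<le> B" and Bh: "B \<le> real h" and Bsqrt: "B \<le> sqrt (real h) * A"
    and red: "reduced_bform n A B p"
    and prim0: "gcd x0 y0 = 1" and prim: "gcd x y = 1"
    and indep: "x0 * y - x * y0 \<noteq> 0"
    and F0: "A \<le> \<bar>real_of_int (bform n p x0 y0)\<bar>" "\<bar>real_of_int (bform n p x0 y0)\<bar> \<le> B"
    and F1: "A \<le> \<bar>real_of_int (bform n p x y)\<bar>" "\<bar>real_of_int (bform n p x y)\<bar> \<le> B"
  shows "\<exists>\<psi> :: nat \<Rightarrow> real.
           (\<forall>i<n. \<psi> i = 0 \<or> (1 / (2 * real n) \<le> \<psi> i \<and> \<psi> i \<le> 1)) \<and>
           (\<Sum>i<n. \<psi> i) \<ge> 1 / 2 \<and>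
           (\<forall>i<n. cmod ((of_int x0 - \<alpha> i * of_int y0) / (of_int x - \<alpha> i * of_int y))
              \<ge> ((mahler_measure p / real h) powr (\<psi> i) - 3 / 2 - real h powr (1 / (2 * real n)))
                 * real_of_int \<bar>x0 * y - x * y0\<bar>)"
proof -
  have degp: "degree p = n" using classC unfolding class_C_def irreducible_bform_def by auto
  have lc: "Polynomial.coeff p n \<noteq> 0"
  proof
    assume "Polynomial.coeff p n = 0"
    then have "p = 0" using degp by (metis leading_coeff_0_iff)
    then show False using degp n3 by simp
  qed
  have b10: "bform n p (1::int) 0 = Polynomial.coeff p n" using bform_10[where 'a=int, of n p] by simp
  define a0 where "a0 = complex_of_int (bform n p 1 0)"
  have Fc: "\<And>X Y. bform n p X Y = a0 * (\<Prod>i<n. (X - \<alpha> i * Y))"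
    using bform_factored[OF roots] unfolding a0_def by simp
  have Fint: "\<And>X Y::int. complex_of_int (bform n p X Y) = bform n p (of_int X) (of_int Y)"
    unfolding bform_def by simp
  have Fxy0: "bform n p x y \<noteq> 0"
  proof
    assume "bform n p x y = 0"
    then have "A \<le> 0" using F1 by simp
    then have "A = 0" using A0 by simp
    then have "B \<le> 0" using Bsqrt by simp
    moreover have "\<bar>real_of_int (bform n p 1 0)\<bar> \<le> B"
      using red unfolding reduced_bform_def normalized_bform_def by auto
    ultimately have "bform n p (1::int) 0 = 0" by simp
    then show False using b10 lc by simp
  qed
  define L where "L = (\<lambda>i. of_int x - \<alpha> i * of_int y :: complex)"
  define Fxy where "Fxy = complex_of_int (bform n p x y)"
  have Fxy_c: "Fxy = a0 * (\<Prod>i<n. L i)" unfolding Fxy_def L_def using Fint Fc by simp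
  have Fxy_nz: "Fxy \<noteq> 0" using Fxy0 unfolding Fxy_def by simp
  have Lnz: "L i \<noteq> 0" if "i < n" for i
    using Fxy_nz that unfolding Fxy_c by auto
  obtain s0 t0 :: int where st: "s0 * x + t0 * y = 1" using bezout_int[of x y] prim by auto
  define d where "d = x * y0 - y * x0"
  have dnz: "d \<noteq> 0" using indep unfolding d_def by (simp add: algebra_simps)
  have absd: "\<bar>d\<bar> = \<bar>x0 * y - x * y0\<bar>" unfolding d_def by (simp add: abs_minus_commute algebra_simps)
  define a1 where "a1 = x0 * s0 - y0 * (- t0)"
  define k where "k = a1 div d"
  define u where "u = - t0 + k * x"
  define v where "v = s0 + k * y"
  define a where "a = x0 * v - y0 * u"
  have det: "x * v - u * y = 1" unfolding u_def v_def using st by (simp add: algebra_simps)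
  have a_eq: "a = a1 mod d"
    unfolding a_def a1_def k_def u_def v_def d_def
    by (simp add: minus_div_mult_eq_mod [symmetric] algebra_simps)
  have abs_a: "\<bar>a\<bar> \<le> \<bar>d\<bar>"
    unfolding a_eq using dnz
    by (smt (verit) neg_mod_bound neg_mod_sign pos_mod_bound pos_mod_sign)
  have x0e: "x0 = a * x + d * u"
  proof -
    have "a * x + d * u = x0 * (x * v - u * y)" unfolding a_def d_def by (simp add: algebra_simps)
    then show ?thesis using det by simp
  qed
  have y0e: "y0 = a * y + d * v"
  proof -
    have "a * y + d * v = y0 * (x * v - u * y)" unfolding a_def d_def by (simp add: algebra_simps)
    then show ?thesis using det by simp
  qed
  define \<gamma> where "\<gamma> = (\<lambda>i. - (of_int u - \<alpha> i * of_int v) / L i :: complex)"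
  have Lg: "L i * \<gamma> i = - (of_int u - \<alpha> i * of_int v)" if "i < n" for i
    using Lnz[OF that] unfolding \<gamma>_def by simp
  have Lfac: "L i * (T - \<gamma> i * S) = (of_int x * T + of_int u * S) - \<alpha> i * (of_int y * T + of_int v * S)"
    if "i < n" for i T S
  proof -
    have "L i * (T - \<gamma> i * S) = L i * T - (L i * \<gamma> i) * S" by (simp add: algebra_simps)
    also have "\<dots> = L i * T + (of_int u - \<alpha> i * of_int v) * S" by (simp only: Lg[OF that]) (simp add: algebra_simps)
    also have "\<dots> = (of_int x * T + of_int u * S) - \<alpha> i * (of_int y * T + of_int v * S)"
      unfolding L_def by (simp add: algebra_simps)
    finally show ?thesis .
  qed
  define q :: "int poly" where "q = bform n p [:u, x:] [:v, y:]"
  have qmap: "map_poly complex_of_int q = Polynomial.smult Fxy (\<Prod>i<n. [:- \<gamma> i, 1:])"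
  proof -
    have "poly (map_poly complex_of_int q) t = poly (Polynomial.smult Fxy (\<Prod>i<n. [:- \<gamma> i, 1:])) t" for t
    proof -
      have "map_poly complex_of_int q = bform n p (map_poly complex_of_int [:u, x:]) (map_poly complex_of_int [:v, y:])"
        unfolding q_def bform_def by (simp add: hom_distribs)
      moreover have "map_poly complex_of_int [:u, x:] = [:of_int u, of_int x:]"
        by (rule poly_eqI) (simp add: coeff_map_poly coeff_pCons split: nat.split)
      moreover have "map_poly complex_of_int [:v, y:] = [:of_int v, of_int y:]"
        by (rule poly_eqI) (simp add: coeff_map_poly coeff_pCons split: nat.split)
      ultimately have "poly (map_poly complex_of_int q) t = bform n p (of_int u + of_int x * t) (of_int v + of_int y * t)"
        unfolding bform_def by (simp add: poly_sum poly_mult poly_power mult.commute)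
      also have "\<dots> = a0 * (\<Prod>i<n. (of_int u + of_int x * t) - \<alpha> i * (of_int v + of_int y * t))"
        by (rule Fc)
      also have "\<dots> = a0 * (\<Prod>i<n. L i * (t - \<gamma> i * 1))"
        by (intro arg_cong[where f="\<lambda>z. a0 * z"] prod.cong refl)
           (use Lfac[of _ t 1] in \<open>simp add: algebra_simps\<close>)
      also have "\<dots> = Fxy * (\<Prod>i<n. (t - \<gamma> i))"
        unfolding Fxy_c by (simp add: prod.distrib)
      also have "\<dots> = poly (Polynomial.smult Fxy (\<Prod>i<n. [:- \<gamma> i, 1:])) t"
        by (simp add: poly_prod)
      finally show ?thesis .
    qed
    then show ?thesis using poly_eq_poly_eq_iff by blast
  qed
  have qeq: "bform n q X Y = bform n p (x * X + u * Y) (y * X + v * Y)" for X Y :: int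
  proof -
    have "complex_of_int (bform n q X Y) = Fxy * (\<Prod>i<n. (of_int X - \<gamma> i * of_int Y))"
      using bform_factored[OF qmap, of "of_int X" "of_int Y"] unfolding bform_def by simp
    also have "\<dots> = a0 * (\<Prod>i<n. L i * (of_int X - \<gamma> i * of_int Y))"
      unfolding Fxy_c by (simp add: prod.distrib)
    also have "\<dots> = a0 * (\<Prod>i<n. of_int (x * X + u * Y) - \<alpha> i * of_int (y * X + v * Y))"
      by (intro arg_cong[where f="\<lambda>z. a0 * z"] prod.cong refl)
         (use Lfac[of _ "of_int X" "of_int Y"] in \<open>simp add: algebra_simps\<close>)
    also have "\<dots> = complex_of_int (bform n p (x * X + u * Y) (y * X + v * Y))"
      using Fint Fc by simp
    finally show ?thesis by (simp only: of_int_eq_iff)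
  qed
  have degq: "degree q \<le> n"
  proof -
    have "degree (map_poly complex_of_int q) = n"
      unfolding qmap using Fxy_nz lin_prod_deg_lead[where m=n and b=\<gamma>] by simp
    then show ?thesis by (simp add: of_int_hom.degree_map_poly_hom)
  qed
  have eqv: "equiv_bform n p q"
  proof -
    have "\<bar>x * v - u * y\<bar> = 1 \<and> (1 = (1::int) \<or> 1 = -1) \<and>
      (\<forall>X Y::int. bform n q X Y = 1 * bform n p (x * X + u * Y) (y * X + v * Y))"
      using det qeq by simp
    then show ?thesis unfolding equiv_bform_def using degq by blast
  qed
  have nq: "normalized_bform n A B q"
    unfolding normalized_bform_def using qeq[of 1 0] F1 by simp
  have Mle: "mahler_measure p \<le> mahler_measure q"
    using red eqv nq unfolding reduced_bform_def by blast
  have Mq: "mahler_measure q = cmod Fxy * (\<Prod>i<n. max 1 (cmod (\<gamma> i)))"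
    unfolding mahler_measure_def qmap by (rule mm_lin_prod)
  define G where "G = cmod Fxy"
  have Gabs: "G = \<bar>real_of_int (bform n p x y)\<bar>" unfolding G_def Fxy_def by (simp only: norm_of_int)
  have Gpos: "G > 0" using Fxy0 Gabs by simp
  have Gle: "G \<le> real h" using Gabs F1(2) Bh by simp
  define Pi where "Pi = (\<Prod>i<n. max 1 (cmod (\<gamma> i)))"
  have Pi1: "Pi \<ge> 1" unfolding Pi_def by (rule prod_ge_1) simp
  define M where "M = mahler_measure p"
  have M0: "M \<ge> 0" unfolding M_def by (rule mahler_measure_ge_0)
  define Q where "Q = M / real h"
  have hpos': "real h > 0" using hpos by simp
  have Q0: "Q \<ge> 0" unfolding Q_def using M0 hpos' by simp
  have MGP: "M \<le> G * Pi" using Mle Mq unfolding M_def G_def Pi_def by simp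
  have "G * Pi \<le> real h * Pi" using Gle Pi1 by (simp add: mult_right_mono)
  then have QPi: "Q \<le> Pi" unfolding Q_def using MGP hpos' by (simp add: divide_le_eq mult.commute)
  define c where "c = 3/2 + real h powr (1/(2*real n))"
  have c1: "c \<ge> 1" unfolding c_def using powr_ge_zero[of "real h" "1/(2*real n)"] by linarith
  define D where "D = real_of_int \<bar>x0 * y - x * y0\<bar>"
  have D0: "D \<ge> 0" unfolding D_def by simp
  have absdD: "real_of_int \<bar>d\<bar> = D" unfolding D_def absd ..
  have KEY: "cmod ((of_int x0 - \<alpha> i * of_int y0) / (of_int x - \<alpha> i * of_int y)) \<ge> (cmod (\<gamma> i) - 1) * D"
    if "i < n" for i
  proof -
    have e1: "of_int x0 - \<alpha> i * of_int y0 = (of_int a - of_int d * \<gamma> i) * L i"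
    proof -
      have "(of_int a - of_int d * \<gamma> i) * L i = of_int a * L i - of_int d * (L i * \<gamma> i)"
        by (simp add: algebra_simps)
      also have "\<dots> = of_int a * L i + of_int d * (of_int u - \<alpha> i * of_int v)"
        by (simp only: Lg[OF that]) (simp add: algebra_simps)
      also have "\<dots> = of_int x0 - \<alpha> i * of_int y0"
        unfolding L_def by (simp add: x0e y0e algebra_simps)
      finally show ?thesis by simp
    qed
    have r: "(of_int x0 - \<alpha> i * of_int y0) / (of_int x - \<alpha> i * of_int y) = of_int a - of_int d * \<gamma> i"
      using e1 Lnz[OF that] unfolding L_def by simp
    have "cmod (of_int d * \<gamma> i) - cmod (of_int a :: complex) \<le> cmod (of_int d * \<gamma> i - of_int a)"
      by (rule norm_triangle_ineq2)
    also have "\<dots> = cmod (of_int a - of_int d * \<gamma> i)" by (rule norm_minus_commute)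
    finally have t: "D * cmod (\<gamma> i) - real_of_int \<bar>a\<bar> \<le> cmod (of_int a - of_int d * \<gamma> i)"
      using absdD by (simp add: norm_mult)
    have "real_of_int \<bar>a\<bar> \<le> D" using abs_a absdD by linarith
    then have "(cmod (\<gamma> i) - 1) * D \<le> cmod (of_int a - of_int d * \<gamma> i)"
      using t by (simp add: algebra_simps)
    then show ?thesis by (simp only: r)
  qed
  show ?thesis
  proof (cases "Q \<le> 1")
    case True
    have "Q powr 1 \<le> 1" using True Q0 by simp
    then have neg: "(Q powr 1 - c) * D \<le> 0" using c1 D0 by (intro mult_nonpos_nonneg) auto
    define \<psi> where "\<psi> = (\<lambda>i::nat. 1::real)"
    have range: "\<forall>i<n. \<psi> i = 0 \<or> (1 / (2 * real n) \<le> \<psi> i \<and> \<psi> i \<le> 1)"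
      unfolding \<psi>_def using n3 by auto
    have sum\<psi>: "(\<Sum>i<n. \<psi> i) \<ge> 1/2" unfolding \<psi>_def using n3 by simp
    have ineq: "(Q powr \<psi> i - c) * D \<le> cmod ((of_int x0 - \<alpha> i * of_int y0) / (of_int x - \<alpha> i * of_int y))"
      if "i < n" for i unfolding \<psi>_def using neg by (meson norm_ge_zero order_trans)
    have third: "\<forall>i<n. cmod ((of_int x0 - \<alpha> i * of_int y0) / (of_int x - \<alpha> i * of_int y))
              \<ge> ((mahler_measure p / real h) powr (\<psi> i) - 3 / 2 - real h powr (1 / (2 * real n)))
                 * real_of_int \<bar>x0 * y - x * y0\<bar>"
    proof (intro allI impI)
      fix i assume "i < n"
      from ineq[OF this] show "cmod ((of_int x0 - \<alpha> i * of_int y0) / (of_int x - \<alpha> i * of_int y))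
              \<ge> ((mahler_measure p / real h) powr (\<psi> i) - 3 / 2 - real h powr (1 / (2 * real n)))
                 * real_of_int \<bar>x0 * y - x * y0\<bar>"
        unfolding Q_def M_def c_def D_def by (simp add: diff_diff_eq)
    qed
    show ?thesis by (rule exI[of _ \<psi>]) (intro conjI range sum\<psi> third)
  next
    case False
    then have Q1: "Q > 1" by simp
    have lnQ: "ln Q > 0" using Q1 by simp
    define \<psi>' where "\<psi>' = (\<lambda>i. ln (max 1 (cmod (\<gamma> i))) / ln Q)"
    define \<psi> where "\<psi> = (\<lambda>i. if \<psi>' i < 1/(2*real n) then 0 else min 1 (\<psi>' i))"
    have \<psi>'0: "\<psi>' i \<ge> 0" for i unfolding \<psi>'_def using lnQ by simp
    have \<psi>0: "\<psi> i \<ge> 0" for i unfolding \<psi>_def using \<psi>'0[of i] by simp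
    have sum\<psi>': "(\<Sum>i<n. \<psi>' i) \<ge> 1"
    proof -
      have "(\<Sum>i<n. \<psi>' i) = (\<Sum>i<n. ln (max 1 (cmod (\<gamma> i)))) / ln Q"
        unfolding \<psi>'_def by (simp add: sum_divide_distrib)
      also have "(\<Sum>i<n. ln (max 1 (cmod (\<gamma> i)))) = ln Pi"
        unfolding Pi_def by (subst ln_prod) auto
      finally have e: "(\<Sum>i<n. \<psi>' i) = ln Pi / ln Q" .
      have "ln Q \<le> ln Pi" using QPi Q1 by simp
      then show ?thesis unfolding e using lnQ by simp
    qed
    have range: "\<forall>i<n. \<psi> i = 0 \<or> (1 / (2 * real n) \<le> \<psi> i \<and> \<psi> i \<le> 1)"
      unfolding \<psi>_def using n3 by auto
    have sum\<psi>: "(\<Sum>i<n. \<psi> i) \<ge> 1/2"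
    proof (cases "\<exists>i<n. \<psi>' i \<ge> 1")
      case True
      then obtain i where i: "i < n" "\<psi>' i \<ge> 1" by blast
      have h1: "1 / (2 * real n) \<le> 1" using n3 by simp
      then have "\<not> \<psi>' i < 1 / (2 * real n)" using i by linarith
      then have "\<psi> i = 1" unfolding \<psi>_def using i by (auto simp: not_less)
      moreover have "\<psi> i \<le> (\<Sum>i<n. \<psi> i)" using i \<psi>0 by (intro member_le_sum) auto
      ultimately show ?thesis by simp
    next
      case False
      have "\<psi> i \<ge> \<psi>' i - 1/(2*real n)" if "i < n" for i
        using False that divide_nonneg_nonneg[of 1 "2 * real n"] unfolding \<psi>_def by (auto simp: not_le)
      then have "(\<Sum>i<n. \<psi>' i - 1/(2*real n)) \<le> (\<Sum>i<n. \<psi> i)" by (intro sum_mono) auto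
      moreover have "(\<Sum>i<n. \<psi>' i - 1/(2*real n)) = (\<Sum>i<n. \<psi>' i) - 1/2"
        using n3 by (simp add: sum_subtractf)
      ultimately show ?thesis using sum\<psi>' by simp
    qed
    have ineq: "(Q powr \<psi> i - c) * D \<le> cmod ((of_int x0 - \<alpha> i * of_int y0) / (of_int x - \<alpha> i * of_int y))"
      if i: "i < n" for i
    proof (cases "\<psi> i = 0")
      case True
      then have "(Q powr \<psi> i - c) * D \<le> 0" using Q1 c1 D0 by (intro mult_nonpos_nonneg) auto
      then show ?thesis by (meson norm_ge_zero order_trans)
    next
      case False
      then have ge: "\<psi>' i \<ge> 1/(2*real n)" and le: "\<psi> i \<le> \<psi>' i"
        unfolding \<psi>_def by (auto split: if_splits)
      have "\<psi>' i > 0" using ge n3 by (smt (verit) divide_pos_pos of_nat_0_less_iff zero_less_numeral mult_pos_pos less_le_trans)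
      then have "ln (max 1 (cmod (\<gamma> i))) / ln Q > 0" unfolding \<psi>'_def .
      then have "ln (max 1 (cmod (\<gamma> i))) > 0" using lnQ
        by (smt (verit) divide_nonpos_pos)
      then have g1: "cmod (\<gamma> i) > 1"
      proof -
        assume lnpos: "ln (max 1 (cmod (\<gamma> i))) > 0"
        show "cmod (\<gamma> i) > 1"
        proof (rule ccontr)
          assume "\<not> cmod (\<gamma> i) > 1"
          then have "max 1 (cmod (\<gamma> i)) = 1" by simp
          then show False using lnpos by simp
        qed
      qed
      have "Q powr \<psi> i \<le> Q powr \<psi>' i" using le Q1 by (intro powr_mono) auto
      also have "Q powr \<psi>' i = exp (ln (max 1 (cmod (\<gamma> i))))"
        unfolding powr_def \<psi>'_def using Q1 lnQ by simp
      also have "\<dots> = cmod (\<gamma> i)" using g1 by (subst max_absorb2) (auto intro: exp_ln)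
      finally have "Q powr \<psi> i - c \<le> cmod (\<gamma> i) - 1" using c1 by simp
      then have "(Q powr \<psi> i - c) * D \<le> (cmod (\<gamma> i) - 1) * D" using D0 by (rule mult_right_mono)
      then show ?thesis using KEY[OF i] by simp
    qed
    have third: "\<forall>i<n. cmod ((of_int x0 - \<alpha> i * of_int y0) / (of_int x - \<alpha> i * of_int y))
              \<ge> ((mahler_measure p / real h) powr (\<psi> i) - 3 / 2 - real h powr (1 / (2 * real n)))
                 * real_of_int \<bar>x0 * y - x * y0\<bar>"
    proof (intro allI impI)
      fix i assume "i < n"
      from ineq[OF this] show "cmod ((of_int x0 - \<alpha> i * of_int y0) / (of_int x - \<alpha> i * of_int y))
              \<ge> ((mahler_measure p / real h) powr (\<psi> i) - 3 / 2 - real h powr (1 / (2 * real n)))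
                 * real_of_int \<bar>x0 * y - x * y0\<bar>"
        unfolding Q_def M_def c_def D_def by (simp add: diff_diff_eq)
    qed
    show ?thesis by (rule exI[of _ \<psi>]) (intro conjI range sum\<psi> third)
  qed
qed

end
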